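(* Let $\mathbb{H}$ be the real quaternion algebra with standard basis $\{1,i,j,k\}$, and let $p\in\mathbb{R}[x]$ be any nonconstant real polynomial. Then $$\{p(ab)-p(ba)\mid a,b\in\mathbb{H}\}=\{bi+cj+dk\mid b,c,d\in\mathbb{R}\}.$$
   Context: $\mathbb{H}$ has multiplication determined by $i^2=j^2=k^2=ijk=-1$. *)

theory Defs
  imports "HOL-Computational_Algebra.Polynomial"
begin

text \<open>The real quaternions, with components Re, Im1 (i), Im2 (j), Im3 (k),
  and multiplication determined by i^2 = j^2 = k^2 = ijk = -1.\<close>

codatatype quat = Quat (Re: real) (Im1: real) (Im2: real) (Im3: real)

instantiation quat :: ring_1
begin
definition "0 = Quat 0 0 0 0"
definition "1 = Quat 1 0 0 0"
definition "x + y = Quat (Re x + Re y) (Im1 x + Im1 y) (Im2 x + Im2 y) (Im3 x + Im3 y)"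
definition "x - y = Quat (Re x - Re y) (Im1 x - Im1 y) (Im2 x - Im2 y) (Im3 x - Im3 y)"
definition "- x = Quat (- Re x) (- Im1 x) (- Im2 x) (- Im3 x)"
definition "x * y = Quat
   (Re x * Re y - Im1 x * Im1 y - Im2 x * Im2 y - Im3 x * Im3 y)
   (Re x * Im1 y + Im1 x * Re y + Im2 x * Im3 y - Im3 x * Im2 y)
   (Re x * Im2 y - Im1 x * Im3 y + Im2 x * Re y + Im3 x * Im1 y)
   (Re x * Im3 y + Im1 x * Im2 y - Im2 x * Im1 y + Im3 x * Re y)"
instance
  by standard (auto simp: zero_quat_def one_quat_def plus_quat_def minus_quat_def
      uminus_quat_def times_quat_def quat.expand algebra_simps)
end

instantiation quat :: real_vector
begin
definition "scaleR r x = Quat (r * Re x) (r * Im1 x) (r * Im2 x) (r * Im3 x)"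
instance
  by standard (auto simp: scaleR_quat_def plus_quat_def quat.expand algebra_simps)
end

instance quat :: real_algebra_1
  by standard (auto simp: scaleR_quat_def times_quat_def one_quat_def quat.expand algebra_simps)

definition quat_i :: quat where "quat_i = Quat 0 1 0 0"
definition quat_j :: quat where "quat_j = Quat 0 0 1 0"
definition quat_k :: quat where "quat_k = Quat 0 0 0 1"

text \<open>Evaluation of a real polynomial at a quaternion (real coefficients are central).\<close>
definition qpoly :: "real poly \<Rightarrow> quat \<Rightarrow> quat" where
  "qpoly p x = (\<Sum>n\<le>degree p. coeff p n *\<^sub>R x ^ n)"

end

theory Submission
  imports Defs "HOL-Computational_Algebra.Fundamental_Theorem_Algebra"
begin

definition phi :: "quat \<Rightarrow> complex \<Rightarrow> quat" where
  "phi e z = Complex.Re z *\<^sub>R 1 + Complex.Im z *\<^sub>R e"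

lemma phi_add: "phi e (z + w) = phi e z + phi e w"
  by (simp add: phi_def scaleR_add_left algebra_simps)

lemma phi_mult: assumes "e * e = -1" shows "phi e (z * w) = phi e z * phi e w"
proof -
  have "phi e z * phi e w = (Complex.Re z * Complex.Re w) *\<^sub>R 1
      + (Complex.Re z * Complex.Im w + Complex.Im z * Complex.Re w) *\<^sub>R e
      + (Complex.Im z * Complex.Im w) *\<^sub>R (e * e)"
    by (simp add: phi_def algebra_simps scaleR_add_left)
  also have "\<dots> = phi e (z * w)" using assms
    by (simp add: phi_def algebra_simps scaleR_add_left)
  finally show ?thesis by simp
qed

lemma phi_one: "phi e 1 = 1" by (simp add: phi_def)

lemma phi_pow: assumes "e * e = -1" shows "phi e (z ^ n) = phi e z ^ n"
  by (induction n) (simp_all add: phi_one phi_mult[OF assms])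

lemma phi_zero: "phi e 0 = 0" by (simp add: phi_def)

lemma phi_sum: "phi e (sum f A) = (\<Sum>x\<in>A. phi e (f x))"
  by (induction A rule: infinite_finite_induct) (simp_all add: phi_add phi_zero)

lemma phi_ofreal_mult: "phi e (of_real c * z) = c *\<^sub>R phi e z"
  by (simp add: phi_def algebra_simps)

lemma qpoly_phi: assumes "e * e = -1"
  shows "qpoly p (phi e z) = phi e (poly (map_poly of_real p) z)"
  unfolding qpoly_def poly_altdef
  by (simp add: phi_sum phi_ofreal_mult phi_pow[OF assms] degree_map_poly coeff_map_poly)


lemma quat_eqI: "quat.Re x = quat.Re y \<Longrightarrow> Im1 x = Im1 y \<Longrightarrow> Im2 x = Im2 y \<Longrightarrow> Im3 x = Im3 y \<Longrightarrow> x = y"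
  by (simp add: quat.expand)

definition nv :: "quat \<Rightarrow> real" where "nv q = (Im1 q)^2 + (Im2 q)^2 + (Im3 q)^2"
definition zq :: "quat \<Rightarrow> complex" where "zq q = Complex (quat.Re q) (sqrt (nv q))"
definition eq :: "quat \<Rightarrow> quat" where
  "eq q = (if nv q = 0 then quat_i else (1 / sqrt (nv q)) *\<^sub>R Quat 0 (Im1 q) (Im2 q) (Im3 q))"

lemma sq_unit: assumes "quat.Re e = 0" "nv e = 1" shows "e * e = -1"
  using assms by (simp add: times_quat_def uminus_quat_def one_quat_def quat.expand nv_def power2_eq_square)

lemma nv_scale: "nv (c *\<^sub>R x) = c^2 * nv x"
  by (simp add: nv_def scaleR_quat_def power_mult_distrib algebra_simps)

lemma nv_nonneg: "nv q \<ge> 0" by (simp add: nv_def)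

lemma eq_props: "quat.Re (eq q) = 0" "eq q * eq q = -1"
proof -
  show "quat.Re (eq q) = 0" by (simp add: eq_def quat_i_def scaleR_quat_def)
  have "nv (eq q) = 1"
  proof (cases "nv q = 0")
    case True then show ?thesis by (simp add: eq_def quat_i_def nv_def)
  next
    case False
    have n: "nv (Quat 0 (Im1 q) (Im2 q) (Im3 q)) = nv q" by (simp add: nv_def)
    have "(1 / sqrt (nv q))^2 = 1 / nv q" using nv_nonneg[of q]
      by (simp add: power_divide)
    then show ?thesis using False by (simp add: eq_def nv_scale n)
  qed
  then show "eq q * eq q = -1" by (intro sq_unit) (simp_all add: eq_def quat_i_def scaleR_quat_def)
qed

lemma phi_repr: "phi (eq q) (zq q) = q"
proof (cases "nv q = 0")
  case True
  then have "Im1 q = 0 \<and> Im2 q = 0 \<and> Im3 q = 0" unfolding nv_def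
    by (smt (verit) zero_le_power2 power2_less_eq_zero_iff)
  then show ?thesis using True
    by (simp add: phi_def eq_def zq_def quat.expand scaleR_quat_def one_quat_def plus_quat_def)
next
  case False
  then have "sqrt (nv q) > 0" using nv_nonneg[of q] by simp
  then show ?thesis using False
    by (simp add: phi_def eq_def zq_def quat.expand scaleR_quat_def one_quat_def plus_quat_def)
qed

lemma Re_phi: "quat.Re e = 0 \<Longrightarrow> quat.Re (phi e z) = Complex.Re z"
  by (simp add: phi_def scaleR_quat_def one_quat_def plus_quat_def)

lemma Re_qpoly: "quat.Re (qpoly p q) = Complex.Re (poly (map_poly of_real p) (zq q))"
proof -
  have "qpoly p q = qpoly p (phi (eq q) (zq q))" by (simp add: phi_repr)
  also have "\<dots> = phi (eq q) (poly (map_poly of_real p) (zq q))"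
    by (rule qpoly_phi[OF eq_props(2)])
  finally show ?thesis using Re_phi[OF eq_props(1)] by simp
qed

lemma four_sq: "(a0*b0 - a1*b1 - a2*b2 - a3*b3)^2 + (a0*b1 + a1*b0 + a2*b3 - a3*b2)^2 + (a0*b2 - a1*b3 + a2*b0 + a3*b1)^2 + (a0*b3 + a1*b2 - a2*b1 + a3*b0)^2
 = ((a0::real)^2+a1^2+a2^2+a3^2)*(b0^2+b1^2+b2^2+b3^2)"
  by algebra

lemma normq_mult: "(quat.Re (a*b))^2 + nv (a*b) = ((quat.Re a)^2 + nv a) * ((quat.Re b)^2 + nv b)"
  unfolding times_quat_def nv_def quat.sel add.assoc[symmetric] by (rule four_sq)

lemma zq_comm: "zq (a * b) = zq (b * a)"
proof -
  have r: "quat.Re (a * b) = quat.Re (b * a)" by (simp add: times_quat_def)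
  have "(quat.Re (a*b))^2 + nv (a*b) = (quat.Re (b*a))^2 + nv (b*a)"
    unfolding normq_mult by simp
  then have "nv (a*b) = nv (b*a)" using r by simp
  then show ?thesis using r by (simp add: zq_def)
qed


lemma poly_cnj_real: "poly (map_poly complex_of_real p) (cnj z) = cnj (poly (map_poly complex_of_real p) z)"
  unfolding poly_altdef by (simp add: degree_map_poly coeff_map_poly)

lemma a_sq: "quat.Re a = 0 \<Longrightarrow> a * a = - (nv a *\<^sub>R 1)"
  by (simp add: times_quat_def uminus_quat_def scaleR_quat_def one_quat_def nv_def quat.expand power2_eq_square)

lemma a_anti: "quat.Re a = 0 \<Longrightarrow> quat.Re e = 0 \<Longrightarrow> Im1 a * Im1 e + Im2 a * Im2 e + Im3 a * Im3 e = 0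
   \<Longrightarrow> a * e = - (e * a)"
  by (simp add: times_quat_def uminus_quat_def quat.expand)

lemma swap:
  assumes "quat.Re a = 0" "quat.Re e = 0" "Im1 a * Im1 e + Im2 a * Im2 e + Im3 a * Im3 e = 0" "nv a \<noteq> 0"
  shows "a * ((-1 / nv a) *\<^sub>R (a * phi e z)) = phi e z"
    and "((-1 / nv a) *\<^sub>R (a * phi e z)) * a = phi e (cnj z)"
proof -
  have sq: "a * a = - (nv a *\<^sub>R 1)" using a_sq[OF assms(1)] .
  have an: "a * e = - (e * a)" using a_anti[OF assms(1-3)] .
  have "a * ((-1 / nv a) *\<^sub>R (a * phi e z)) = (-1 / nv a) *\<^sub>R ((a * a) * phi e z)"
    by (simp add: mult.assoc)
  also have "\<dots> = phi e z" using assms(4) by (simp add: sq)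
  finally show "a * ((-1 / nv a) *\<^sub>R (a * phi e z)) = phi e z" .
  have "a * phi e z * a = Complex.Re z *\<^sub>R (a * a) + Complex.Im z *\<^sub>R (a * e * a)"
    by (simp add: phi_def algebra_simps)
  also have "a * e * a = - (e * (a * a))" by (simp add: an mult.assoc)
  also have "Complex.Re z *\<^sub>R (a * a) + Complex.Im z *\<^sub>R (- (e * (a * a))) = (- nv a) *\<^sub>R phi e (cnj z)"
    by (simp add: sq phi_def algebra_simps)
  finally have "a * phi e z * a = (- nv a) *\<^sub>R phi e (cnj z)" .
  then show "((-1 / nv a) *\<^sub>R (a * phi e z)) * a = phi e (cnj z)"
    using assms(4) by simp
qed

lemma phi_imag: "phi e (Complex 0 s) = s *\<^sub>R e" by (simp add: phi_def)

theorem theorem2p11: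
  fixes p :: "real poly"
  assumes "degree p \<ge> 1"
  shows "{qpoly p (a * b) - qpoly p (b * a) | a b. True}
       = {b *\<^sub>R quat_i + c *\<^sub>R quat_j + d *\<^sub>R quat_k | b c d. True}"
proof
  show "{qpoly p (a * b) - qpoly p (b * a) | a b. True}
       \<subseteq> {b *\<^sub>R quat_i + c *\<^sub>R quat_j + d *\<^sub>R quat_k | b c d. True}"
  proof
    fix y assume "y \<in> {qpoly p (a * b) - qpoly p (b * a) | a b. True}"
    then obtain a b where y: "y = qpoly p (a * b) - qpoly p (b * a)" by blast
    have "quat.Re y = 0" unfolding y
      by (simp add: minus_quat_def Re_qpoly zq_comm)
    then have "y = Im1 y *\<^sub>R quat_i + Im2 y *\<^sub>R quat_j + Im3 y *\<^sub>R quat_k"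
      by (simp add: quat.expand scaleR_quat_def plus_quat_def quat_i_def quat_j_def quat_k_def)
    then show "y \<in> {b *\<^sub>R quat_i + c *\<^sub>R quat_j + d *\<^sub>R quat_k | b c d. True}" by blast
  qed
next
  show "{b *\<^sub>R quat_i + c *\<^sub>R quat_j + d *\<^sub>R quat_k | b c d. True}
      \<subseteq> {qpoly p (a * b) - qpoly p (b * a) | a b. True}"
  proof
    fix x assume "x \<in> {b *\<^sub>R quat_i + c *\<^sub>R quat_j + d *\<^sub>R quat_k | b c d. True}"
    then obtain B C D where "x = B *\<^sub>R quat_i + C *\<^sub>R quat_j + D *\<^sub>R quat_k" by blast
    then have x: "x = Quat 0 B C D"
      by (simp add: quat.expand scaleR_quat_def plus_quat_def quat_i_def quat_j_def quat_k_def)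
    show "x \<in> {qpoly p (a * b) - qpoly p (b * a) | a b. True}"
    proof (cases "nv x = 0")
      case True
      then have "B = 0 \<and> C = 0 \<and> D = 0" unfolding nv_def x
        by (smt (verit) quat.sel zero_le_power2 power2_less_eq_zero_iff)
      then have "x = qpoly p (0 * 0) - qpoly p (0 * 0)" by (simp add: x zero_quat_def)
      then show ?thesis by blast
    next
      case False
      define r where "r = sqrt (nv x)"
      have r0: "r > 0" using False nv_nonneg[of x] by (simp add: r_def)
      define e where "e = (1 / r) *\<^sub>R x"
      have reE: "quat.Re e = 0" by (simp add: e_def x scaleR_quat_def)
      have "nv e = (1/r)^2 * nv x" by (simp add: e_def nv_scale)
      also have "nv x = r^2" using nv_nonneg[of x] by (simp add: r_def)
      finally have "nv e = 1" using r0 by (simp add: power_divide)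
      then have ee: "e * e = -1" using sq_unit reE by blast
      define P where "P = map_poly complex_of_real p"
      have dP: "degree P = degree p" by (simp add: P_def degree_map_poly)
      define Q where "Q = P + [:- Complex 0 (r/2):]"
      have "degree Q = degree P" unfolding Q_def
        by (rule degree_add_eq_left) (use assms dP in simp)
      then have "\<not> constant (poly Q)" using assms dP by (simp add: constant_degree)
      then obtain z where "poly Q z = 0" using fundamental_theorem_of_algebra by blast
      then have pz: "poly P z = Complex 0 (r/2)" by (simp add: Q_def)
      have pcz: "poly P (cnj z) = Complex 0 (-(r/2))" using pz poly_cnj_real[of p z]
        by (simp add: P_def complex_eq_iff)
      have val: "qpoly p (phi e z) - qpoly p (phi e (cnj z)) = x"
      proof -
        have "qpoly p (phi e z) - qpoly p (phi e (cnj z)) = (r/2) *\<^sub>R e - (-(r/2)) *\<^sub>R e"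
          using qpoly_phi[OF ee, of p] pz pcz by (simp add: P_def phi_imag)
        also have "\<dots> = r *\<^sub>R e" by (simp add: scaleR_add_left[symmetric])
        also have "\<dots> = x" using r0 by (simp add: e_def)
        finally show ?thesis .
      qed
      define a where "a = (if B = 0 \<and> C = 0 then quat_i else Quat 0 (-C) B 0)"
      have ra: "quat.Re a = 0" by (simp add: a_def quat_i_def)
      have orth: "Im1 a * Im1 e + Im2 a * Im2 e + Im3 a * Im3 e = 0"
        by (simp add: a_def quat_i_def e_def x scaleR_quat_def algebra_simps)
      have na: "nv a \<noteq> 0"
        by (auto simp add: a_def quat_i_def nv_def sum_power2_eq_zero_iff)
      define b where "b = (-1 / nv a) *\<^sub>R (a * phi e z)"
      have "a * b = phi e z" "b * a = phi e (cnj z)"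
        using swap[OF ra reE orth na, of z] by (simp_all add: b_def)
      then have "x = qpoly p (a * b) - qpoly p (b * a)" using val by simp
      then show ?thesis by blast
    qed
  qed
qed

end
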